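(* Let $\mathbf A$ be a non-trivial finite Cornish algebra of type $F=F^+\,\dot\cup\,F^-$. If $F^-=\emptyset$, then $\mathbf A$ is not quasi-primal.
   Context: Let $F=F^+\,\dot\cup\,F^-$ be a set of unary operation symbols. A Cornish algebra of type $F$ is an algebra $\langle A;\vee,\wedge,\{f^{\mathbf A}\}_{f\in F},0,1\rangle$ whose reduct $\langle A;\vee,\wedge,0,1\rangle$ is a bounded distributive lattice, with $f^{\mathbf A}$ an endomorphism of that bounded lattice for $f\in F^+$ and a dual endomorphism for $f\in F^-$. A finite algebra is quasi-primal if the ternary discriminator ($\tau(x,y,z)=x$ if $x\ne y$, $=z$ if $x=y$) is a term function of it. *)

theory Defs
  imports Main
begin

definition bdl :: "'a set \<Rightarrow> ('a \<Rightarrow> 'a \<Rightarrow> 'a) \<Rightarrow> ('a \<Rightarrow> 'a \<Rightarrow> 'a) \<Rightarrow> 'a \<Rightarrow> 'a \<Rightarrow> bool" where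
  "bdl A jn mt z u \<longleftrightarrow>
     z \<in> A \<and> u \<in> A \<and>
     (\<forall>x\<in>A. \<forall>y\<in>A. jn x y \<in> A \<and> mt x y \<in> A) \<and>
     (\<forall>x\<in>A. \<forall>y\<in>A. \<forall>w\<in>A. jn (jn x y) w = jn x (jn y w) \<and> mt (mt x y) w = mt x (mt y w)) \<and>
     (\<forall>x\<in>A. \<forall>y\<in>A. jn x y = jn y x \<and> mt x y = mt y x) \<and>
     (\<forall>x\<in>A. \<forall>y\<in>A. jn x (mt x y) = x \<and> mt x (jn x y) = x) \<and>
     (\<forall>x\<in>A. \<forall>y\<in>A. \<forall>w\<in>A. mt x (jn y w) = jn (mt x y) (mt x w)) \<and>
     (\<forall>x\<in>A. jn z x = x \<and> mt u x = x)"

definition lat_endo :: "'a set \<Rightarrow> ('a \<Rightarrow> 'a \<Rightarrow> 'a) \<Rightarrow> ('a \<Rightarrow> 'a \<Rightarrow> 'a) \<Rightarrow> 'a \<Rightarrow> 'a \<Rightarrow> ('a \<Rightarrow> 'a) \<Rightarrow> bool" where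
  "lat_endo A jn mt z u g \<longleftrightarrow>
     (\<forall>x\<in>A. g x \<in> A) \<and>
     (\<forall>x\<in>A. \<forall>y\<in>A. g (jn x y) = jn (g x) (g y) \<and> g (mt x y) = mt (g x) (g y)) \<and>
     g z = z \<and> g u = u"

definition lat_dual_endo :: "'a set \<Rightarrow> ('a \<Rightarrow> 'a \<Rightarrow> 'a) \<Rightarrow> ('a \<Rightarrow> 'a \<Rightarrow> 'a) \<Rightarrow> 'a \<Rightarrow> 'a \<Rightarrow> ('a \<Rightarrow> 'a) \<Rightarrow> bool" where
  "lat_dual_endo A jn mt z u g \<longleftrightarrow>
     (\<forall>x\<in>A. g x \<in> A) \<and>
     (\<forall>x\<in>A. \<forall>y\<in>A. g (jn x y) = mt (g x) (g y) \<and> g (mt x y) = jn (g x) (g y)) \<and>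
     g z = u \<and> g u = z"

definition cornish_algebra :: "'a set \<Rightarrow> ('a \<Rightarrow> 'a \<Rightarrow> 'a) \<Rightarrow> ('a \<Rightarrow> 'a \<Rightarrow> 'a) \<Rightarrow> 'a \<Rightarrow> 'a \<Rightarrow>
    'f set \<Rightarrow> 'f set \<Rightarrow> ('f \<Rightarrow> 'a \<Rightarrow> 'a) \<Rightarrow> bool" where
  "cornish_algebra A jn mt z u Fp Fm ops \<longleftrightarrow>
     bdl A jn mt z u \<and> Fp \<inter> Fm = {} \<and>
     (\<forall>f\<in>Fp. lat_endo A jn mt z u (ops f)) \<and>
     (\<forall>f\<in>Fm. lat_dual_endo A jn mt z u (ops f))"

inductive_set term3 :: "('a \<Rightarrow> 'a \<Rightarrow> 'a) \<Rightarrow> ('a \<Rightarrow> 'a \<Rightarrow> 'a) \<Rightarrow> 'a \<Rightarrow> 'a \<Rightarrow>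
    'f set \<Rightarrow> ('f \<Rightarrow> 'a \<Rightarrow> 'a) \<Rightarrow> ('a \<Rightarrow> 'a \<Rightarrow> 'a \<Rightarrow> 'a) set"
  for jn mt z u F ops where
  pr1: "(\<lambda>x y w. x) \<in> term3 jn mt z u F ops"
| pr2: "(\<lambda>x y w. y) \<in> term3 jn mt z u F ops"
| pr3: "(\<lambda>x y w. w) \<in> term3 jn mt z u F ops"
| cz: "(\<lambda>x y w. z) \<in> term3 jn mt z u F ops"
| cu: "(\<lambda>x y w. u) \<in> term3 jn mt z u F ops"
| jn: "s \<in> term3 jn mt z u F ops \<Longrightarrow> t \<in> term3 jn mt z u F ops \<Longrightarrow>
        (\<lambda>x y w. jn (s x y w) (t x y w)) \<in> term3 jn mt z u F ops"
| mt: "s \<in> term3 jn mt z u F ops \<Longrightarrow> t \<in> term3 jn mt z u F ops \<Longrightarrow>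
        (\<lambda>x y w. mt (s x y w) (t x y w)) \<in> term3 jn mt z u F ops"
| op: "f \<in> F \<Longrightarrow> s \<in> term3 jn mt z u F ops \<Longrightarrow>
        (\<lambda>x y w. ops f (s x y w)) \<in> term3 jn mt z u F ops"

definition discriminator :: "'a \<Rightarrow> 'a \<Rightarrow> 'a \<Rightarrow> 'a" where
  "discriminator x y w = (if x \<noteq> y then x else w)"

definition quasi_primal :: "'a set \<Rightarrow> ('a \<Rightarrow> 'a \<Rightarrow> 'a) \<Rightarrow> ('a \<Rightarrow> 'a \<Rightarrow> 'a) \<Rightarrow> 'a \<Rightarrow> 'a \<Rightarrow>
    'f set \<Rightarrow> ('f \<Rightarrow> 'a \<Rightarrow> 'a) \<Rightarrow> bool" where
  "quasi_primal A jn mt z u F ops \<longleftrightarrow> finite A \<and>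
     (\<exists>t\<in>term3 jn mt z u F ops. \<forall>x\<in>A. \<forall>y\<in>A. \<forall>w\<in>A. t x y w = discriminator x y w)"

end

theory Submission
  imports Defs
begin

lemma bdl_le_conv:
  assumes "bdl A jn mt z u" "a \<in> A" "b \<in> A"
  shows "jn a b = b \<longleftrightarrow> mt a b = a"
  using assms unfolding bdl_def by metis

lemma bdl_mono_jn:
  assumes "bdl A jn mt z u" "a \<in> A" "b \<in> A" "c \<in> A" "d \<in> A"
    "jn a b = b" "jn c d = d"
  shows "jn (jn a c) (jn b d) = jn b d"
proof -
  have "jn (jn a c) (jn b d) = jn (jn a b) (jn c d)"
    using assms unfolding bdl_def by metis
  then show ?thesis using assms by simp
qed

lemma bdl_mono_mt:
  assumes "bdl A jn mt z u" "a \<in> A" "b \<in> A" "c \<in> A" "d \<in> A"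
    "jn a b = b" "jn c d = d"
  shows "jn (mt a c) (mt b d) = mt b d"
proof -
  have ab: "mt a b = a" and cd: "mt c d = c" using assms bdl_le_conv by metis+
  have "mt (mt a c) (mt b d) = mt (mt a b) (mt c d)"
    using assms unfolding bdl_def by metis
  then have "mt (mt a c) (mt b d) = mt a c" using ab cd by simp
  moreover have "mt a c \<in> A" "mt b d \<in> A" using assms unfolding bdl_def by auto
  ultimately show ?thesis using bdl_le_conv[OF assms(1)] by metis
qed

lemma term_mono:
  assumes bd: "bdl A jn mt z u" and ops: "\<forall>f\<in>F. lat_endo A jn mt z u (ops f)"
    and t: "t \<in> term3 jn mt z u F ops"
  shows "t z z u \<in> A \<and> t z u u \<in> A \<and> jn (t z z u) (t z u u) = t z u u"
  using t
proof (induction rule: term3.induct)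
  case pr1 then show ?case using bd unfolding bdl_def by auto
next
  case pr2 then show ?case using bd unfolding bdl_def by auto
next
  case pr3
  have "jn u u = u" using bd unfolding bdl_def by metis
  then show ?case using bd unfolding bdl_def by auto
next
  case cz then show ?case using bd unfolding bdl_def by auto
next
  case cu
  have "jn u u = u" using bd unfolding bdl_def by metis
  then show ?case using bd unfolding bdl_def by auto
next
  case (jn s t)
  have c: "jn (s z z u) (t z z u) \<in> A" "jn (s z u u) (t z u u) \<in> A"
    using jn bd unfolding bdl_def by auto
  show ?case using c bdl_mono_jn[OF bd, of "s z z u" "s z u u" "t z z u" "t z u u"] jn by auto
next
  case (mt s t)
  have c: "mt (s z z u) (t z z u) \<in> A" "mt (s z u u) (t z u u) \<in> A"
    using mt bd unfolding bdl_def by auto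
  show ?case using c bdl_mono_mt[OF bd, of "s z z u" "s z u u" "t z z u" "t z u u"] mt by auto
next
  case (op f s)
  then have e: "lat_endo A jn mt z u (ops f)" using ops by auto
  then show ?case using op unfolding lat_endo_def by metis
qed

theorem theorem5p7:
  fixes A :: "'a set" and jn mt :: "'a \<Rightarrow> 'a \<Rightarrow> 'a" and z u :: 'a
    and Fp Fm :: "'f set" and ops :: "'f \<Rightarrow> 'a \<Rightarrow> 'a"
  assumes "cornish_algebra A jn mt z u Fp Fm ops"
    and "finite A"
    and "\<exists>x\<in>A. \<exists>y\<in>A. x \<noteq> y"
    and "Fm = {}"
  shows "\<not> quasi_primal A jn mt z u (Fp \<union> Fm) ops"
proof
  assume q: "quasi_primal A jn mt z u (Fp \<union> Fm) ops"
  have bd: "bdl A jn mt z u" and ops: "\<forall>f\<in>Fp \<union> Fm. lat_endo A jn mt z u (ops f)"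
    using assms(1,4) unfolding cornish_algebra_def by auto
  have zu: "z \<in> A" "u \<in> A" using bd unfolding bdl_def by auto
  have ne: "z \<noteq> u"
  proof
    assume "z = u"
    have "\<forall>x\<in>A. x = z"
    proof
      fix x assume x: "x \<in> A"
      have "mt z (jn z x) = z" using bd x zu unfolding bdl_def by metis
      moreover have "jn z x = x" "mt u x = x" using bd x unfolding bdl_def by auto
      ultimately show "x = z" using \<open>z = u\<close> by simp
    qed
    then show False using assms(3) by metis
  qed
  obtain t where t: "t \<in> term3 jn mt z u (Fp \<union> Fm) ops"
    and d: "\<forall>x\<in>A. \<forall>y\<in>A. \<forall>w\<in>A. t x y w = discriminator x y w"
    using q unfolding quasi_primal_def by auto
  have "t z z u = u" "t z u u = z" using d zu ne by (auto simp: discriminator_def)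
  moreover have "jn (t z z u) (t z u u) = t z u u" using term_mono[OF bd ops t] by auto
  ultimately have "jn u z = z" by simp
  moreover have "jn u z = u" using bd zu unfolding bdl_def by metis
  ultimately show False using ne by simp
qed

end
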